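(* For every grounding tree $\Gamma[\Delta]\blacktriangleright A$ of size greater than $1$, one can derive from it, using only $\triangleright$ elimination rules, all the immediate grounding claims that compose it, and one can derive $\Gamma[\Delta]\blacktriangleright A$ from these immediate grounding claims using only $\triangleright$ introduction rules.
   Context: Language: grounding trees are formulae $\Gamma[\Delta]\blacktriangleright A$ where $\Gamma,\Delta$ are finite lists ($\Delta$ possibly empty) whose elements are either formulae or expressions $(\Theta[\Sigma])\triangleright B$, with $B$ a formula and $\Theta,\Sigma$ again such lists (nesting arbitrarily). An immediate grounding claim is such a formula in which no element of $\Gamma,\Delta$ has the form $(\cdot)\triangleright\cdot$. The immediate grounding claims composing a grounding tree $\Gamma[\Delta]\blacktriangleright A$ are defined recursively: if the elements of $\Gamma,\Delta$ of the form $(\cdot)\triangleright\cdot$ are $(\Gamma_i[\Delta_i])\triangleright A_i$ ($1\le i\le n$), they are the immediate grounding claim obtained by replacing each $(\Gamma_i[\Delta_i])\triangleright A_i$ with $A_i$, together with the immediate grounding claims composing each $\Gamma_i[\Delta_i]\blacktriangleright A_i$. Size: an immediate grounding claim has size $1$; if the elements of $\Gamma$ and $\Delta$ with outermost operator $\triangleright$ are $(\Gamma_1[\Delta_1])\triangleright A_1,\dots,(\Gamma_n[\Delta_n])\triangleright A_n$, then $|\Gamma[\Delta]\blacktriangleright A| = |\Gamma_1[\Delta_1]\blacktriangleright A_1|+\dots+|\Gamma_n[\Delta_n]\blacktriangleright A_n|+1$. Rules for $\triangleright$: Introductions: from $\Delta[\Theta]\blacktriangleright A$ and $\Gamma_1,A,\Gamma_2[\Xi]\blacktriangleright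 B$ infer $\Gamma_1,(\Delta[\Theta])\triangleright A,\Gamma_2[\Xi]\blacktriangleright B$; from $\Delta[\Theta]\blacktriangleright C$ and $\Gamma[\Xi_1,C,\Xi_2]\blacktriangleright B$ infer $\Gamma[\Xi_1,(\Delta[\Theta])\triangleright C,\Xi_2]\blacktriangleright B$. Eliminations: from $\Gamma_1,(\Delta[\Theta])\triangleright A,\Gamma_2[\Xi]\blacktriangleright B$ infer $\Delta[\Theta]\blacktriangleright A$ and $\Gamma_1,A,\Gamma_2[\Xi]\blacktriangleright B$; from $\Gamma[\Xi_1,(\Delta[\Theta])\triangleright C,\Xi_2]\blacktriangleright B$ infer $\Delta[\Theta]\blacktriangleright C$ and $\Gamma[\Xi_1,C,\Xi_2]\blacktriangleright B$. *)

theory Defs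
  imports Main
begin

text \<open>An element of a list \<Gamma> or \<Delta> is either a formula (F A) or an expression
  (\<Theta>[\<Sigma>]) \<triangleright> B, represented as Tri \<Theta> \<Sigma> B.\<close>

datatype 'f elem = F 'f | Tri "'f elem list" "'f elem list" 'f

text \<open>A grounding tree \<Gamma>[\<Delta>] \<blacktriangleright> A is the triple (\<Gamma>, \<Delta>, A).\<close>
type_synonym 'f gtree = "'f elem list \<times> 'f elem list \<times> 'f"

fun is_tri :: "'f elem \<Rightarrow> bool" where
  "is_tri (F a) = False"
| "is_tri (Tri G D a) = True"

definition immediate :: "'f gtree \<Rightarrow> bool" where
  "immediate t = (case t of (G, D, A) \<Rightarrow> (\<forall>e \<in> set (G @ D). \<not> is_tri e))"

fun strip :: "'f elem \<Rightarrow> 'f elem" where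
  "strip (F a) = F a"
| "strip (Tri G D a) = F a"

fun comps :: "'f elem \<Rightarrow> 'f gtree set" where
  "comps (F a) = {}"
| "comps (Tri G D a) = insert (map strip G, map strip D, a) (\<Union> (set (map comps (G @ D))))"

definition composing :: "'f gtree \<Rightarrow> 'f gtree set" where
  "composing t = (case t of (G, D, A) \<Rightarrow> comps (Tri G D A))"

fun esize :: "'f elem \<Rightarrow> nat" where
  "esize (F a) = 0"
| "esize (Tri G D a) = 1 + sum_list (map esize (G @ D))"

definition gsize :: "'f gtree \<Rightarrow> nat" where
  "gsize t = (case t of (G, D, A) \<Rightarrow> esize (Tri G D A))"

inductive elim_der :: "'f gtree set \<Rightarrow> 'f gtree \<Rightarrow> bool" for H where
  prem: "t \<in> H \<Longrightarrow> elim_der H t"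
| elimL1: "elim_der H (G1 @ Tri D Th A # G2, X, B) \<Longrightarrow> elim_der H (D, Th, A)"
| elimL2: "elim_der H (G1 @ Tri D Th A # G2, X, B) \<Longrightarrow> elim_der H (G1 @ F A # G2, X, B)"
| elimR1: "elim_der H (G, X1 @ Tri D Th C # X2, B) \<Longrightarrow> elim_der H (D, Th, C)"
| elimR2: "elim_der H (G, X1 @ Tri D Th C # X2, B) \<Longrightarrow> elim_der H (G, X1 @ F C # X2, B)"

inductive intro_der :: "'f gtree set \<Rightarrow> 'f gtree \<Rightarrow> bool" for H where
  prem: "t \<in> H \<Longrightarrow> intro_der H t"
| introL: "intro_der H (D, Th, A) \<Longrightarrow> intro_der H (G1 @ F A # G2, X, B)
           \<Longrightarrow> intro_der H (G1 @ Tri D Th A # G2, X, B)"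
| introR: "intro_der H (D, Th, C) \<Longrightarrow> intro_der H (G, X1 @ F C # X2, B)
           \<Longrightarrow> intro_der H (G, X1 @ Tri D Th C # X2, B)"

end

theory Submission
  imports Defs
begin

lemma elim_sub_L:
  assumes "elim_der H (G, D, B)" "Tri G' D' a \<in> set G"
  shows "elim_der H (G', D', a)"
proof -
  obtain xs ys where "G = xs @ Tri G' D' a # ys" using assms(2) by (metis split_list)
  thus ?thesis using assms(1) elim_der.elimL1 by metis
qed

lemma elim_sub_R:
  assumes "elim_der H (G, D, B)" "Tri G' D' a \<in> set D"
  shows "elim_der H (G', D', a)"
proof -
  obtain xs ys where "D = xs @ Tri G' D' a # ys" using assms(2) by (metis split_list)
  thus ?thesis using assms(1) elim_der.elimR1 by metis
qed

lemma elim_strip_L: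
  "elim_der H (G1 @ G2, D, B) \<Longrightarrow> elim_der H (G1 @ map strip G2, D, B)"
proof (induction G2 arbitrary: G1)
  case Nil thus ?case by simp
next
  case (Cons e G2)
  show ?case
  proof (cases e)
    case (F x)
    thus ?thesis using Cons.IH[of "G1 @ [e]"] Cons.prems by simp
  next
    case (Tri G' D' a)
    have "elim_der H (G1 @ F a # G2, D, B)"
      using Cons.prems Tri elim_der.elimL2 by fastforce
    thus ?thesis using Cons.IH[of "G1 @ [F a]"] Tri by simp
  qed
qed

lemma elim_strip_R:
  "elim_der H (G, D1 @ D2, B) \<Longrightarrow> elim_der H (G, D1 @ map strip D2, B)"
proof (induction D2 arbitrary: D1)
  case Nil thus ?case by simp
next
  case (Cons e D2)
  show ?case
  proof (cases e)
    case (F x)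
    thus ?thesis using Cons.IH[of "D1 @ [e]"] Cons.prems by simp
  next
    case (Tri G' D' a)
    have "elim_der H (G, D1 @ F a # D2, B)"
      using Cons.prems Tri elim_der.elimR2 by fastforce
    thus ?thesis using Cons.IH[of "D1 @ [F a]"] Tri by simp
  qed
qed

lemma elim_main:
  "\<forall>G D B. e = Tri G D B \<longrightarrow> elim_der H (G, D, B) \<longrightarrow> (\<forall>c \<in> comps e. elim_der H c)"
proof (induction e)
  case (F x) thus ?case by simp
next
  case (Tri G D a)
  show ?case
  proof (intro allI impI ballI)
    fix G0 D0 B c
    assume eq: "Tri G D a = Tri G0 D0 B" and d: "elim_der H (G0, D0, B)" and c: "c \<in> comps (Tri G D a)"
    hence d: "elim_der H (G, D, a)" using eq by simp
    have s: "elim_der H (map strip G, map strip D, a)"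
      using elim_strip_L[of H "[]" G D a] elim_strip_R[of H "map strip G" "[]" D a] d by simp
    from c consider "c = (map strip G, map strip D, a)"
      | e where "e \<in> set G" "c \<in> comps e" | e where "e \<in> set D" "c \<in> comps e" by auto
    thus "elim_der H c"
    proof cases
      case 1 thus ?thesis using s by simp
    next
      case 2
      show ?thesis
      proof (cases e)
        case (F x) thus ?thesis using 2 F by simp
      next
        case (Tri G' D' a')
        thus ?thesis using 2 Tri.IH(1) elim_sub_L[OF d, of G' D' a'] by blast
      qed
    next
      case 3
      show ?thesis
      proof (cases e)
        case (F x) thus ?thesis using 3 F by simp
      next
        case (Tri G' D' a')
        thus ?thesis using 3 Tri.IH(2) elim_sub_R[OF d, of G' D' a'] by blast
      qed
    qed
  qed
qed

lemma intro_L: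
  "intro_der H (G1 @ map strip G2, D, B) \<Longrightarrow>
   (\<forall>G' D' a. Tri G' D' a \<in> set G2 \<longrightarrow> intro_der H (G', D', a)) \<Longrightarrow>
   intro_der H (G1 @ G2, D, B)"
proof (induction G2 arbitrary: G1)
  case Nil thus ?case by simp
next
  case (Cons e G2)
  have h: "intro_der H (G1 @ strip e # G2, D, B)"
    using Cons.IH[of "G1 @ [strip e]"] Cons.prems by simp
  show ?case
  proof (cases e)
    case (F x) thus ?thesis using h by simp
  next
    case (Tri G' D' a)
    thus ?thesis using h Cons.prems(2) intro_der.introL[of H G' D' a G1 G2 D B] by simp
  qed
qed

lemma intro_R:
  "intro_der H (G, D1 @ map strip D2, B) \<Longrightarrow>
   (\<forall>G' D' a. Tri G' D' a \<in> set D2 \<longrightarrow> intro_der H (G', D', a)) \<Longrightarrow>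
   intro_der H (G, D1 @ D2, B)"
proof (induction D2 arbitrary: D1)
  case Nil thus ?case by simp
next
  case (Cons e D2)
  have h: "intro_der H (G, D1 @ strip e # D2, B)"
    using Cons.IH[of "D1 @ [strip e]"] Cons.prems by simp
  show ?case
  proof (cases e)
    case (F x) thus ?thesis using h by simp
  next
    case (Tri G' D' a)
    thus ?thesis using h Cons.prems(2) intro_der.introR[of H G' D' a G D1 D2 B] by simp
  qed
qed

lemma intro_main:
  "\<forall>G D B. e = Tri G D B \<longrightarrow> comps e \<subseteq> H \<longrightarrow> intro_der H (G, D, B)"
proof (induction e)
  case (F x) thus ?case by simp
next
  case (Tri G D a)
  show ?case
  proof (intro allI impI)
    fix G0 D0 B
    assume eq: "Tri G D a = Tri G0 D0 B" and sub: "comps (Tri G D a) \<subseteq> H"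
    have s: "intro_der H (map strip G, map strip D, a)"
      using sub intro_der.prem by auto
    have hG: "\<forall>G' D' a'. Tri G' D' a' \<in> set G \<longrightarrow> intro_der H (G', D', a')"
    proof (intro allI impI)
      fix G' D' a' assume m: "Tri G' D' a' \<in> set G"
      have "comps (Tri G' D' a') \<subseteq> \<Union> (comps ` set G)" using m by blast
      moreover have "\<Union> (comps ` set G) \<union> \<Union> (comps ` set D) \<subseteq> H" using sub by simp
      ultimately have "comps (Tri G' D' a') \<subseteq> H" by blast
      thus "intro_der H (G', D', a')" using Tri.IH(1)[OF m] by blast
    qed
    have hD: "\<forall>G' D' a'. Tri G' D' a' \<in> set D \<longrightarrow> intro_der H (G', D', a')"
    proof (intro allI impI)
      fix G' D' a' assume m: "Tri G' D' a' \<in> set D"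
      have "comps (Tri G' D' a') \<subseteq> \<Union> (comps ` set D)" using m by blast
      moreover have "\<Union> (comps ` set G) \<union> \<Union> (comps ` set D) \<subseteq> H" using sub by simp
      ultimately have "comps (Tri G' D' a') \<subseteq> H" by blast
      thus "intro_der H (G', D', a')" using Tri.IH(2)[OF m] by blast
    qed
    have "intro_der H (map strip G, D, a)"
      using intro_R[of H "map strip G" "[]" D a] s hD by simp
    hence "intro_der H (G, D, a)"
      using intro_L[of H "[]" G D a] hG by simp
    thus "intro_der H (G0, D0, B)" using eq by simp
  qed
qed

theorem mainTheorem5:
  fixes t :: "'f gtree"
  assumes "gsize t > 1"
  shows "(\<forall>c \<in> composing t. elim_der {t} c) \<and> intro_der (composing t) t"
proof -
  obtain G D A where t: "t = (G, D, A)" by (cases t) auto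
  have "elim_der {t} t" by (rule elim_der.prem) simp
  hence "elim_der {t} (G, D, A)" using t by simp
  hence 1: "\<forall>c \<in> composing t. elim_der {t} c"
    using elim_main[of "Tri G D A" "{t}"] t by (simp add: composing_def)
  have 2: "intro_der (composing t) t"
    using intro_main[of "Tri G D A" "composing t"] t by (simp add: composing_def)
  show ?thesis using 1 2 by simp
qed

end
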